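(* Let $M_{\mathrm{B_{vi}}}$ be the monoid with generators $a,b,c$ and relations $aba=bab$, $bcb=cbc$, $aca=bac$, $cab=bca$, $acb=cac$, $abb=bbc$, $bcca=ccac$, $bbac=caab$, $cbbb=bbba$, $acbcb=bccca$, $accbb=bccba$, $accaa=ccaac$, $caacc=aacca$, $acccc=bcccb$, $bbaac=cbaab$, $caaab=abaac$, $a^5=b^5$, $b^5=c^5$, $ccbaac=accbaa$; and let $M_{\mathrm{H_{iii}}}$ be the monoid with generators $a,b,c$ and relations $aba=bab$, $aca=cac$, $bcb=abc$, $cba=acb$, $bca=cbc$, $baa=aac$, $accb=ccbc$, $aabc=cbba$, $caaa=aaab$, $bcaca=acccb$, $bccaa=accab$, $bccbb=ccbbc$, $cbbcc=bbccb$, $bcccc=accca$, $aabbc=cabba$, $cbbba=babbc$, $a^5=b^5$, $b^5=c^5$, $ccabbc=bccabb$. Let $G_{\mathrm{B_{vi}}}$, $G_{\mathrm{H_{iii}}}$ be the groups with the same presentations and $G^+_{\mathrm{B_{vi}}}$, $G^+_{\mathrm{H_{iii}}}$ the submonoids generated by $a,b,c$. Then the correspondence $a\mapsto b$, $b\mapsto a$, $c\mapsto c$ induces a monoid isomorphism $M_{\mathrm{B_{vi}}}\cong M_{\mathrm{H_{iii}}}$, and hence also isomorphisms $G_{\mathrm{B_{vi}}}\cong G_{\mathrm{H_{iii}}}$ and $G^+_{\mathrm{B_{vi}}}\cong G^+_{\mathrm{H_{iii}}}$.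
   Context: A monoid given by generators and relations is the quotient of the free monoid on the generators by the congruence generated by the relations. *)

theory Defs
  imports "HOL-Algebra.Group"
begin

inductive word_cong :: "('a list \<times> 'a list) set \<Rightarrow> 'a list \<Rightarrow> 'a list \<Rightarrow> bool"
  for R where
  base: "(u, v) \<in> R \<Longrightarrow> word_cong R u v"
| refl: "word_cong R u u"
| sym: "word_cong R u v \<Longrightarrow> word_cong R v u"
| trans: "word_cong R u v \<Longrightarrow> word_cong R v w \<Longrightarrow> word_cong R u w"
| ctxt: "word_cong R u v \<Longrightarrow> word_cong R (x @ u @ y) (x @ v @ y)"

definition word_class :: "('a list \<times> 'a list) set \<Rightarrow> 'a list \<Rightarrow> 'a list set" where
  "word_class R w = {u. word_cong R u w}"

definition presented_monoid :: "('a list \<times> 'a list) set \<Rightarrow> 'a list set monoid" where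
  "presented_monoid R =
     \<lparr> carrier = range (word_class R),
       mult = (\<lambda>X Y. {w. \<exists>u\<in>X. \<exists>v\<in>Y. word_cong R w (u @ v)}),
       one = word_class R [] \<rparr>"

text \<open>The group with the same presentation: the monoid presented by generators and their
  formal inverses (letter (x,True) stands for x^-1), relations R together with
  x x^-1 = 1 and x^-1 x = 1.\<close>

definition group_rels :: "('a list \<times> 'a list) set \<Rightarrow> (('a \<times> bool) list \<times> ('a \<times> bool) list) set" where
  "group_rels R =
     {(map (\<lambda>x. (x, False)) u, map (\<lambda>x. (x, False)) v) | u v. (u, v) \<in> R}
     \<union> {([(x, False), (x, True)], []) | x. True}
     \<union> {([(x, True), (x, False)], []) | x. True}"

definition presented_group :: "('a list \<times> 'a list) set \<Rightarrow> ('a \<times> bool) list set monoid" where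
  "presented_group R = presented_monoid (group_rels R)"

definition group_gen :: "('a list \<times> 'a list) set \<Rightarrow> 'a \<Rightarrow> ('a \<times> bool) list set" where
  "group_gen R x = word_class (group_rels R) [(x, False)]"

definition positive_submonoid :: "('a list \<times> 'a list) set \<Rightarrow> ('a \<times> bool) list set monoid" where
  "positive_submonoid R =
     (presented_group R) \<lparr> carrier :=
        \<Inter> {S. submonoid S (presented_group R) \<and> range (group_gen R) \<subseteq> S} \<rparr>"

datatype gen = a | b | c

definition rels_Bvi :: "(gen list \<times> gen list) set" where
  "rels_Bvi = {
    ([a,b,a], [b,a,b]),
    ([b,c,b], [c,b,c]),
    ([a,c,a], [b,a,c]),
    ([c,a,b], [b,c,a]),
    ([a,c,b], [c,a,c]),
    ([a,b,b], [b,b,c]),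
    ([b,c,c,a], [c,c,a,c]),
    ([b,b,a,c], [c,a,a,b]),
    ([c,b,b,b], [b,b,b,a]),
    ([a,c,b,c,b], [b,c,c,c,a]),
    ([a,c,c,b,b], [b,c,c,b,a]),
    ([a,c,c,a,a], [c,c,a,a,c]),
    ([c,a,a,c,c], [a,a,c,c,a]),
    ([a,c,c,c,c], [b,c,c,c,b]),
    ([b,b,a,a,c], [c,b,a,a,b]),
    ([c,a,a,a,b], [a,b,a,a,c]),
    ([a,a,a,a,a], [b,b,b,b,b]),
    ([b,b,b,b,b], [c,c,c,c,c]),
    ([c,c,b,a,a,c], [a,c,c,b,a,a])}"

definition rels_Hiii :: "(gen list \<times> gen list) set" where
  "rels_Hiii = {
    ([a,b,a], [b,a,b]),
    ([a,c,a], [c,a,c]),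
    ([b,c,b], [a,b,c]),
    ([c,b,a], [a,c,b]),
    ([b,c,a], [c,b,c]),
    ([b,a,a], [a,a,c]),
    ([a,c,c,b], [c,c,b,c]),
    ([a,a,b,c], [c,b,b,a]),
    ([c,a,a,a], [a,a,a,b]),
    ([b,c,a,c,a], [a,c,c,c,b]),
    ([b,c,c,a,a], [a,c,c,a,b]),
    ([b,c,c,b,b], [c,c,b,b,c]),
    ([c,b,b,c,c], [b,b,c,c,b]),
    ([b,c,c,c,c], [a,c,c,c,a]),
    ([a,a,b,b,c], [c,a,b,b,a]),
    ([c,b,b,b,a], [b,a,b,b,c]),
    ([a,a,a,a,a], [b,b,b,b,b]),
    ([b,b,b,b,b], [c,c,c,c,c]),
    ([c,c,a,b,b,c], [b,c,c,a,b,b])}"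

fun swap_ab :: "gen \<Rightarrow> gen" where
  "swap_ab a = b" | "swap_ab b = a" | "swap_ab c = c"

end

theory Submission
  imports Defs
begin

lemma cong_map:
  assumes tr: "\<And>u v. (u,v) \<in> R \<Longrightarrow> word_cong S (map f u) (map f v)"
  shows "word_cong R u v \<Longrightarrow> word_cong S (map f u) (map f v)"
proof (induction rule: word_cong.induct)
  case (base u v) then show ?case by (rule tr)
next
  case (refl u) then show ?case by (rule word_cong.refl)
next
  case (sym u v) show ?case using sym.IH by (rule word_cong.sym)
next
  case (trans u v w) then show ?case by (metis word_cong.trans)
next
  case (ctxt u v x y) then show ?case using word_cong.ctxt by fastforce
qed

lemma class_eq_iff: "word_class R u = word_class R v \<longleftrightarrow> word_cong R u v"
proof
  assume "word_class R u = word_class R v"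
  moreover have "u \<in> word_class R u" by (simp add: word_class_def word_cong.refl)
  ultimately show "word_cong R u v" by (simp add: word_class_def)
next
  assume h: "word_cong R u v"
  show "word_class R u = word_class R v"
    unfolding word_class_def using h
    by (auto intro: word_cong.trans word_cong.sym)
qed

lemma cong_app: "word_cong R u u' \<Longrightarrow> word_cong R v v' \<Longrightarrow> word_cong R (u@v) (u'@v')"
proof -
  assume h1: "word_cong R u u'" and h2: "word_cong R v v'"
  have "word_cong R ([] @ u @ v) ([] @ u' @ v)" by (rule word_cong.ctxt[OF h1])
  moreover have "word_cong R (u' @ v @ []) (u' @ v' @ [])" by (rule word_cong.ctxt[OF h2])
  ultimately show ?thesis by (auto intro: word_cong.trans)
qed

lemma mult_class:
  "mult (presented_monoid R) (word_class R u) (word_class R v) = word_class R (u@v)"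
  unfolding presented_monoid_def word_class_def
  by (auto intro: word_cong.trans cong_app word_cong.refl)

lemma image_class:
  assumes fg: "\<And>x. g (f x) = x" "\<And>y. f (g y) = y"
    and tRS: "\<And>u v. (u,v) \<in> R \<Longrightarrow> word_cong S (map f u) (map f v)"
    and tSR: "\<And>u v. (u,v) \<in> S \<Longrightarrow> word_cong R (map g u) (map g v)"
  shows "map f ` word_class R w = word_class S (map f w)"
proof
  show "map f ` word_class R w \<subseteq> word_class S (map f w)"
    using cong_map[of R S f, OF tRS] by (auto simp: word_class_def)
next
  show "word_class S (map f w) \<subseteq> map f ` word_class R w"
  proof
    fix x assume "x \<in> word_class S (map f w)"
    then have "word_cong S x (map f w)" by (simp add: word_class_def)
    then have "word_cong R (map g x) (map g (map f w))" using cong_map[of S R g, OF tSR] by blast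
    moreover have "map g (map f w) = w" by (simp add: fg o_def)
    moreover have "x = map f (map g x)" by (simp add: fg o_def)
    ultimately show "x \<in> map f ` word_class R w" unfolding word_class_def by (metis (mono_tags) image_eqI mem_Collect_eq)
  qed
qed

lemma pm_iso:
  assumes fg: "\<And>x. g (f x) = x" "\<And>y. f (g y) = y"
    and tRS: "\<And>u v. (u,v) \<in> R \<Longrightarrow> word_cong S (map f u) (map f v)"
    and tSR: "\<And>u v. (u,v) \<in> S \<Longrightarrow> word_cong R (map g u) (map g v)"
  shows "image (map f) \<in> iso (presented_monoid R) (presented_monoid S)"
proof -
  note ic = image_class[OF fg tRS tSR]
  have hom: "image (map f) \<in> hom (presented_monoid R) (presented_monoid S)"
  proof (rule homI)
    fix X assume "X \<in> carrier (presented_monoid R)"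
    then obtain w where "X = word_class R w" by (auto simp: presented_monoid_def)
    then show "map f ` X \<in> carrier (presented_monoid S)"
      by (simp add: ic presented_monoid_def)
  next
    fix X Y assume "X \<in> carrier (presented_monoid R)" "Y \<in> carrier (presented_monoid R)"
    then obtain u v where "X = word_class R u" "Y = word_class R v"
      by (auto simp: presented_monoid_def)
    then show "map f ` (X \<otimes>\<^bsub>presented_monoid R\<^esub> Y) =
       map f ` X \<otimes>\<^bsub>presented_monoid S\<^esub> map f ` Y"
      by (simp add: mult_class ic)
  qed
  have inj: "inj_on (image (map f)) (carrier (presented_monoid R))"
  proof (rule inj_onI)
    fix X Y assume "X \<in> carrier (presented_monoid R)" "Y \<in> carrier (presented_monoid R)"
      and e: "map f ` X = map f ` Y"
    then obtain u v where X: "X = word_class R u" and Y: "Y = word_class R v"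
      by (auto simp: presented_monoid_def)
    with e have "word_cong S (map f u) (map f v)" by (simp add: ic class_eq_iff)
    then have "word_cong R (map g (map f u)) (map g (map f v))"
      using cong_map[of S R g, OF tSR] by blast
    then have "word_cong R u v" by (simp add: fg o_def)
    then show "X = Y" by (simp add: X Y class_eq_iff)
  qed
  have surj: "image (map f) ` carrier (presented_monoid R) = carrier (presented_monoid S)"
  proof
    show "image (map f) ` carrier (presented_monoid R) \<subseteq> carrier (presented_monoid S)"
      by (auto simp: presented_monoid_def ic)
  next
    show "carrier (presented_monoid S) \<subseteq> image (map f) ` carrier (presented_monoid R)"
    proof
      fix Y assume "Y \<in> carrier (presented_monoid S)"
      then obtain w where Y: "Y = word_class S w" by (auto simp: presented_monoid_def)
      have "Y = map f ` word_class R (map g w)" by (simp add: Y ic fg o_def)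
      then show "Y \<in> image (map f) ` carrier (presented_monoid R)"
        by (auto simp: presented_monoid_def)
    qed
  qed
  show ?thesis using hom inj surj by (auto simp: iso_def bij_betw_def)
qed

lemma group_lift:
  "word_cong S u v \<Longrightarrow> word_cong (group_rels S) (map (\<lambda>x. (x, False)) u) (map (\<lambda>x. (x, False)) v)"
proof (induction rule: word_cong.induct)
  case (base u v) then show ?case by (intro word_cong.base) (auto simp: group_rels_def)
next
  case (refl u) then show ?case by (rule word_cong.refl)
next
  case (sym u v) show ?case using sym.IH by (rule word_cong.sym)
next
  case (trans u v w) then show ?case by (metis word_cong.trans)
next
  case (ctxt u v x y) then show ?case using word_cong.ctxt by fastforce
qed

lemma group_transfer:
  assumes tr: "\<And>u v. (u,v) \<in> R \<Longrightarrow> word_cong S (map f u) (map f v)"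
  shows "(u,v) \<in> group_rels R \<Longrightarrow>
    word_cong (group_rels S) (map (\<lambda>(x,bb). (f x, bb)) u) (map (\<lambda>(x,bb). (f x, bb)) v)"
proof -
  assume "(u,v) \<in> group_rels R"
  then consider (r) u0 v0 where "u = map (\<lambda>x. (x, False)) u0" "v = map (\<lambda>x. (x, False)) v0" "(u0,v0) \<in> R"
    | (i1) x where "u = [(x, False), (x, True)]" "v = []"
    | (i2) x where "u = [(x, True), (x, False)]" "v = []"
    unfolding group_rels_def by blast
  then show ?thesis
  proof cases
    case r
    have "word_cong (group_rels S) (map (\<lambda>x. (x, False)) (map f u0)) (map (\<lambda>x. (x, False)) (map f v0))"
      by (rule group_lift[OF tr[OF r(3)]])
    then show ?thesis using r by (simp add: o_def)
  next
    case i1 then show ?thesis by (auto intro!: word_cong.base simp: group_rels_def)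
  next
    case i2 then show ?thesis by (auto intro!: word_cong.base simp: group_rels_def)
  qed
qed

lemma carrier_submonoid: "submonoid (carrier (presented_monoid R)) (presented_monoid R)"
proof
  show "carrier (presented_monoid R) \<subseteq> carrier (presented_monoid R)" by simp
next
  fix X Y assume "X \<in> carrier (presented_monoid R)" "Y \<in> carrier (presented_monoid R)"
  then obtain u v where "X = word_class R u" "Y = word_class R v"
    by (auto simp: presented_monoid_def)
  then show "X \<otimes>\<^bsub>presented_monoid R\<^esub> Y \<in> carrier (presented_monoid R)"
    by (simp add: mult_class) (simp add: presented_monoid_def)
next
  show "\<one>\<^bsub>presented_monoid R\<^esub> \<in> carrier (presented_monoid R)"
    by (simp add: presented_monoid_def)
qed


lemma img_sub:
  assumes h: "h \<in> hom G H" and one: "h \<one>\<^bsub>G\<^esub> = \<one>\<^bsub>H\<^esub>" and T: "submonoid T G"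
  shows "submonoid (h ` T) H"
proof
  have Tc: "T \<subseteq> carrier G" using T by (rule submonoid.subset)
  have hc: "h \<in> carrier G \<rightarrow> carrier H" using h by (simp add: hom_def)
  show "h ` T \<subseteq> carrier H"
  proof
    fix y assume "y \<in> h ` T"
    then obtain t where "t \<in> T" "y = h t" by blast
    then show "y \<in> carrier H" using Tc hc by (auto simp: Pi_def)
  qed
next
  fix x y assume "x \<in> h ` T" "y \<in> h ` T"
  then obtain s t where st: "s \<in> T" "t \<in> T" "x = h s" "y = h t" by blast
  have Tc: "T \<subseteq> carrier G" using T by (rule submonoid.subset)
  have sc: "s \<in> carrier G" "t \<in> carrier G" using st Tc by auto
  have hm: "\<forall>x\<in>carrier G. \<forall>y\<in>carrier G. h (x \<otimes>\<^bsub>G\<^esub> y) = h x \<otimes>\<^bsub>H\<^esub> h y"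
    using h by (simp add: hom_def)
  have e: "h (s \<otimes>\<^bsub>G\<^esub> t) = x \<otimes>\<^bsub>H\<^esub> y" using hm sc st by simp
  have m: "s \<otimes>\<^bsub>G\<^esub> t \<in> T" using submonoid.m_closed[OF T st(1) st(2)] .
  show "x \<otimes>\<^bsub>H\<^esub> y \<in> h ` T" by (rule image_eqI[where x="s \<otimes>\<^bsub>G\<^esub> t"]) (rule e[symmetric], rule m)
next
  have o1: "\<one>\<^bsub>G\<^esub> \<in> T" using T by (rule submonoid.one_closed)
  show "\<one>\<^bsub>H\<^esub> \<in> h ` T" by (rule image_eqI[where x="\<one>\<^bsub>G\<^esub>"]) (rule one[symmetric], rule o1)
qed

lemma pos_iso:
  fixes G :: "'a monoid" and H :: "'b monoid"
  assumes h: "h \<in> iso G H" and k: "k \<in> iso H G"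
   and kh: "\<And>x. x \<in> carrier G \<Longrightarrow> k (h x) = x" and hk: "\<And>y. y \<in> carrier H \<Longrightarrow> h (k y) = y"
   and one: "h \<one>\<^bsub>G\<^esub> = \<one>\<^bsub>H\<^esub>" "k \<one>\<^bsub>H\<^esub> = \<one>\<^bsub>G\<^esub>"
   and cG: "submonoid (carrier G) G" "submonoid (carrier H) H"
   and gG: "A \<subseteq> carrier G" "B \<subseteq> carrier H" "B \<subseteq> h ` A" "A \<subseteq> k ` B"
  shows "h \<in> iso (G\<lparr>carrier := \<Inter>{T. submonoid T G \<and> A \<subseteq> T}\<rparr>) (H\<lparr>carrier := \<Inter>{T. submonoid T H \<and> B \<subseteq> T}\<rparr>)"
proof -
  define PR where "PR = \<Inter>{T. submonoid T G \<and> A \<subseteq> T}"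
  define PS where "PS = \<Inter>{T. submonoid T H \<and> B \<subseteq> T}"
  have hh: "h \<in> hom G H" and kk: "k \<in> hom H G" using h k by (simp_all add: iso_def)
  have hinj: "inj_on h (carrier G)" using h by (simp add: iso_def bij_betw_def)
  have PRc: "PR \<subseteq> carrier G"
  proof -
    have "carrier G \<in> {T. submonoid T G \<and> A \<subseteq> T}" using cG(1) gG(1) by simp
    then show ?thesis unfolding PR_def by (rule Inter_lower)
  qed
  have PSc: "PS \<subseteq> carrier H"
  proof -
    have "carrier H \<in> {T. submonoid T H \<and> B \<subseteq> T}" using cG(2) gG(2) by simp
    then show ?thesis unfolding PS_def by (rule Inter_lower)
  qed
  have famR: "h ` T \<in> {T. submonoid T H \<and> B \<subseteq> T}" if "T \<in> {T. submonoid T G \<and> A \<subseteq> T}" for T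
  proof -
    have "submonoid T G" "A \<subseteq> T" using that by simp_all
    then have "submonoid (h ` T) H" "B \<subseteq> h ` T" using img_sub[OF hh one(1)] gG(3) by (simp, fast)
    then show ?thesis by simp
  qed
  have famS: "k ` T \<in> {T. submonoid T G \<and> A \<subseteq> T}" if "T \<in> {T. submonoid T H \<and> B \<subseteq> T}" for T
  proof -
    have "submonoid T H" "B \<subseteq> T" using that by simp_all
    then have "submonoid (k ` T) G" "A \<subseteq> k ` T" using img_sub[OF kk one(2)] gG(4) by (simp, fast)
    then show ?thesis by simp
  qed
  have img1: "h ` PR \<subseteq> PS"
  proof
    fix y assume "y \<in> h ` PR"
    then obtain x where x: "x \<in> PR" "y = h x" by (rule imageE) simp
    show "y \<in> PS" unfolding PS_def
    proof (rule InterI)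
      fix T assume T: "T \<in> {T. submonoid T H \<and> B \<subseteq> T}"
      have "x \<in> k ` T" using x(1) famS[OF T] unfolding PR_def by (rule InterD)
      then obtain t where t: "t \<in> T" "x = k t" by (rule imageE) simp
      have "T \<subseteq> carrier H" using T by (simp add: submonoid.subset)
      then have "t \<in> carrier H" using t(1) by (rule subsetD)
      then show "y \<in> T" using x(2) t hk by simp
    qed
  qed
  have img2: "PS \<subseteq> h ` PR"
  proof
    fix y assume y: "y \<in> PS"
    then have yc: "y \<in> carrier H" using PSc by (rule subsetD[rotated])
    have "k y \<in> PR" unfolding PR_def
    proof (rule InterI)
      fix T assume T: "T \<in> {T. submonoid T G \<and> A \<subseteq> T}"
      have "y \<in> h ` T" using y famR[OF T] unfolding PS_def by (rule InterD)
      then obtain t where t: "t \<in> T" "y = h t" by (rule imageE) simp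
      have "T \<subseteq> carrier G" using T by (simp add: submonoid.subset)
      then have "t \<in> carrier G" using t(1) by (rule subsetD)
      then show "k y \<in> T" using t kh by simp
    qed
    moreover have "y = h (k y)" using hk yc by simp
    ultimately show "y \<in> h ` PR" by (rule rev_image_eqI)
  qed
  have inj: "inj_on h PR" using hinj PRc by (rule inj_on_subset)
  have hom: "h \<in> hom (G\<lparr>carrier := PR\<rparr>) (H\<lparr>carrier := PS\<rparr>)"
  proof (rule homI)
    fix x assume "x \<in> carrier (G\<lparr>carrier := PR\<rparr>)"
    then have "h x \<in> h ` PR" by simp
    then show "h x \<in> carrier (H\<lparr>carrier := PS\<rparr>)" using img1 by (simp add: subset_iff)
  next
    fix x y assume "x \<in> carrier (G\<lparr>carrier := PR\<rparr>)" "y \<in> carrier (G\<lparr>carrier := PR\<rparr>)"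
    then have "x \<in> carrier G" "y \<in> carrier G" using PRc by (simp_all add: subset_iff)
    then show "h (x \<otimes>\<^bsub>G\<lparr>carrier := PR\<rparr>\<^esub> y) = h x \<otimes>\<^bsub>H\<lparr>carrier := PS\<rparr>\<^esub> h y"
      using hh by (simp add: hom_def)
  qed
  have bij: "bij_betw h PR PS" unfolding bij_betw_def using inj img1 img2 by simp
  show ?thesis unfolding PR_def[symmetric] PS_def[symmetric] iso_def
    using hom bij by simp
qed

definition fswap :: "gen \<times> bool \<Rightarrow> gen \<times> bool" where
  "fswap = (\<lambda>(x,bb). (swap_ab x, bb))"

lemma swap_inv[simp]: "swap_ab (swap_ab x) = x" by (cases x) auto
lemma fswap_inv[simp]: "fswap (fswap x) = x" by (cases x) (simp add: fswap_def)

lemma H_sym: "(u,v) \<in> rels_Hiii \<or> (v,u) \<in> rels_Hiii \<Longrightarrow> word_cong rels_Hiii u v"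
  using word_cong.base[of u v rels_Hiii] word_cong.sym[OF word_cong.base[of v u rels_Hiii]] by blast
lemma B_sym: "(u,v) \<in> rels_Bvi \<or> (v,u) \<in> rels_Bvi \<Longrightarrow> word_cong rels_Bvi u v"
  using word_cong.base[of u v rels_Bvi] word_cong.sym[OF word_cong.base[of v u rels_Bvi]] by blast

lemma H_ac: "word_cong rels_Hiii [a,a,a,a,a] [c,c,c,c,c]"
  by (rule word_cong.trans[of _ _ "[b,b,b,b,b]"]; rule word_cong.base; simp add: rels_Hiii_def)
lemma B_ac: "word_cong rels_Bvi [a,a,a,a,a] [c,c,c,c,c]"
  by (rule word_cong.trans[of _ _ "[b,b,b,b,b]"]; rule word_cong.base; simp add: rels_Bvi_def)

lemma tBH: "(u,v) \<in> rels_Bvi \<Longrightarrow> word_cong rels_Hiii (map swap_ab u) (map swap_ab v)"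
  apply (simp add: rels_Bvi_def)
  apply (elim disjE conjE)
  apply simp_all
  apply (rule H_ac | (rule H_sym, simp add: rels_Hiii_def))+
  done

lemma tHB: "(u,v) \<in> rels_Hiii \<Longrightarrow> word_cong rels_Bvi (map swap_ab u) (map swap_ab v)"
  apply (simp add: rels_Hiii_def)
  apply (elim disjE conjE)
  apply simp_all
  apply (rule B_ac | (rule B_sym, simp add: rels_Bvi_def))+
  done

lemma gBH: "(u,v) \<in> group_rels rels_Bvi \<Longrightarrow> word_cong (group_rels rels_Hiii) (map fswap u) (map fswap v)"
  using group_transfer[of rels_Bvi rels_Hiii swap_ab, OF tBH] by (simp add: fswap_def)
lemma gHB: "(u,v) \<in> group_rels rels_Hiii \<Longrightarrow> word_cong (group_rels rels_Bvi) (map fswap u) (map fswap v)"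
  using group_transfer[of rels_Hiii rels_Bvi swap_ab, OF tHB] by (simp add: fswap_def)

theorem mainTheorem2:
  shows "(\<exists>h \<in> iso (presented_monoid rels_Bvi) (presented_monoid rels_Hiii).
            \<forall>x. h (word_class rels_Bvi [x]) = word_class rels_Hiii [swap_ab x])
       \<and> (\<exists>h \<in> iso (presented_group rels_Bvi) (presented_group rels_Hiii).
            \<forall>x. h (group_gen rels_Bvi x) = group_gen rels_Hiii (swap_ab x))
       \<and> (\<exists>h \<in> iso (positive_submonoid rels_Bvi) (positive_submonoid rels_Hiii).
            \<forall>x. h (group_gen rels_Bvi x) = group_gen rels_Hiii (swap_ab x))"
proof (intro conjI)
  show "\<exists>h \<in> iso (presented_monoid rels_Bvi) (presented_monoid rels_Hiii).
            \<forall>x. h (word_class rels_Bvi [x]) = word_class rels_Hiii [swap_ab x]"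
  proof (rule bexI[of _ "image (map swap_ab)"])
    show "image (map swap_ab) \<in> iso (presented_monoid rels_Bvi) (presented_monoid rels_Hiii)"
      by (rule pm_iso[of swap_ab swap_ab]) (auto intro: tBH tHB)
    show "\<forall>x. map swap_ab ` word_class rels_Bvi [x] = word_class rels_Hiii [swap_ab x]"
      using image_class[of swap_ab swap_ab rels_Bvi rels_Hiii] tBH tHB by auto
  qed
  let ?h = "image (map fswap)"
  have ic1: "\<And>w. ?h (word_class (group_rels rels_Bvi) w) = word_class (group_rels rels_Hiii) (map fswap w)"
    using image_class[of fswap fswap "group_rels rels_Bvi" "group_rels rels_Hiii"] gBH gHB by auto
  have ic2: "\<And>w. ?h (word_class (group_rels rels_Hiii) w) = word_class (group_rels rels_Bvi) (map fswap w)"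
    using image_class[of fswap fswap "group_rels rels_Hiii" "group_rels rels_Bvi"] gBH gHB by auto
  have i1: "?h \<in> iso (presented_group rels_Bvi) (presented_group rels_Hiii)"
    unfolding presented_group_def by (rule pm_iso[of fswap fswap]) (auto intro: gBH gHB)
  have i2: "?h \<in> iso (presented_group rels_Hiii) (presented_group rels_Bvi)"
    unfolding presented_group_def by (rule pm_iso[of fswap fswap]) (auto intro: gBH gHB)
  have gens: "\<And>x. ?h (group_gen rels_Bvi x) = group_gen rels_Hiii (swap_ab x)"
    by (simp add: group_gen_def ic1, simp add: fswap_def)
  have gens2: "\<And>x. ?h (group_gen rels_Hiii x) = group_gen rels_Bvi (swap_ab x)"
    by (simp add: group_gen_def ic2, simp add: fswap_def)
  show "\<exists>h \<in> iso (presented_group rels_Bvi) (presented_group rels_Hiii).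
            \<forall>x. h (group_gen rels_Bvi x) = group_gen rels_Hiii (swap_ab x)"
    using i1 gens by blast
  have hh: "\<And>X. ?h (?h X) = X" by (simp add: image_image o_def)
  have rg1: "range (group_gen rels_Hiii) \<subseteq> ?h ` range (group_gen rels_Bvi)"
  proof
    fix y assume "y \<in> range (group_gen rels_Hiii)"
    then obtain x where "y = group_gen rels_Hiii x" by blast
    then have "y = ?h (group_gen rels_Bvi (swap_ab x))" using gens[of "swap_ab x"] by simp
    then show "y \<in> ?h ` range (group_gen rels_Bvi)" by blast
  qed
  have rg2: "range (group_gen rels_Bvi) \<subseteq> ?h ` range (group_gen rels_Hiii)"
  proof
    fix y assume "y \<in> range (group_gen rels_Bvi)"
    then obtain x where "y = group_gen rels_Bvi x" by blast
    then have "y = ?h (group_gen rels_Hiii (swap_ab x))" using gens2[of "swap_ab x"] by simp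
    then show "y \<in> ?h ` range (group_gen rels_Hiii)" by blast
  qed
  have c1: "range (group_gen R) \<subseteq> carrier (presented_group R)" for R :: "(gen list \<times> gen list) set"
    by (auto simp: group_gen_def presented_group_def presented_monoid_def)
  have one1: "?h \<one>\<^bsub>presented_group rels_Bvi\<^esub> = \<one>\<^bsub>presented_group rels_Hiii\<^esub>"
    by (simp add: presented_group_def presented_monoid_def ic1)
  have one2: "?h \<one>\<^bsub>presented_group rels_Hiii\<^esub> = \<one>\<^bsub>presented_group rels_Bvi\<^esub>"
    by (simp add: presented_group_def presented_monoid_def ic2)
  have cs1: "submonoid (carrier (presented_group rels_Bvi)) (presented_group rels_Bvi)"
    unfolding presented_group_def by (rule carrier_submonoid)
  have cs2: "submonoid (carrier (presented_group rels_Hiii)) (presented_group rels_Hiii)"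
    unfolding presented_group_def by (rule carrier_submonoid)
  have pI: "?h \<in> iso (positive_submonoid rels_Bvi) (positive_submonoid rels_Hiii)"
    unfolding positive_submonoid_def
    by (rule pos_iso[OF i1 i2 hh hh one1 one2 cs1 cs2 c1 c1 rg1 rg2])
  show "\<exists>h \<in> iso (positive_submonoid rels_Bvi) (positive_submonoid rels_Hiii).
            \<forall>x. h (group_gen rels_Bvi x) = group_gen rels_Hiii (swap_ab x)"
    by (intro bexI[OF _ pI] allI gens)
qed

end
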